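(* Fix $r\ge2$ and $c>\ln4$, and set $c'=c/2-\ln2$ and $\tilde\varepsilon_r=(cm\,2^{r-m})^{1/2^r}$. For $\mathrm{RM}(r,m)$ used on a binary symmetric channel with crossover probability $(1-\tilde\varepsilon_r)/2$, for all sufficiently large $m$ the algorithm $\Phi_r^m$ satisfies, for every end node of its recursion, $$p<\max\left\{e^{-c'm},\,2^{-(m-r)/2+m^{1/2}}\right\},$$ where $p$ is the conditional error probability at that end node defined below; in particular all these probabilities tend to $0$ as $m\to\infty$.
   Context: Assume the all-ones codeword (in $\pm1$ form) is sent; received $y_1,\dots,y_n$ ($n=2^m$) are i.i.d. with $\Pr\{y_i=-1\}=(1-\tilde\varepsilon_r)/2$. For binary strings $\xi$ define $\mathbf y(\varnothing)=\mathbf y$ and, splitting $\mathbf y(\underline\xi)$ into halves $(\mathbf y',\mathbf y'')$, $\mathbf y(\underline\xi,0)=\mathbf y'\mathbf y''$ (componentwise), $\mathbf y(\underline\xi,1)=(\mathbf y'+\mathbf y'')/2$. Algorithm $\Phi_r^m$: on $(\mathbf y',\mathbf y'')$ with $1<r<m$ it decodes $\mathbf y'\mathbf y''$ recursively in $\mathrm{RM}(r-1,m-1)$ obtaining $\hat{\mathbf v}$, then $(\mathbf y'+\mathbf y''\hat{\mathbf v})/2$ recursively in $\mathrm{RM}(r,m-1)$; at $r=1$ (biorthogonal code) or $r=m$ (full space) it performs MD decoding (output the codeword maximizing the inner product with the input). In the recursion tree, from node $(m,r)$ a step $0$ leads to $(m'-1,r'-1)$ and a step $1$ to $(m'-1,r')$;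 the walk stops at a biorthogonal node $(g+1,1)$ or at a full-space node $(h,h)$. With all previous decisions correct, the input at the end node reached by the step string $\underline\xi$ is $\mathbf y(\underline\xi)$. For a biorthogonal node, $p$ is the probability that MD decoding of $\mathbf y(\underline\xi)$ in $\mathrm{RM}(1,g+1)$ returns a codeword other than the all-ones word; for a full-space node, for each coordinate $\sigma$, $p$ is the probability that the $\sigma$-th entry of $\mathbf y(\underline\xi)$ is negative (zero counted with probability $1/2$). *)

theory Defs
  imports Complex_Main
begin

definition sign_vectors :: "nat \<Rightarrow> real list set" where
  "sign_vectors n = {ys. length ys = n \<and> set ys \<subseteq> {-1, 1}}"

text \<open>Probability of a received word when the all-ones word is sent over a BSC
  with crossover probability (1 - eps)/2 (entries i.i.d.).\<close>
definition word_prob :: "real \<Rightarrow> real list \<Rightarrow> real" where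
  "word_prob eps ys = (\<Prod>i<length ys. if ys ! i = -1 then (1 - eps) / 2 else (1 + eps) / 2)"

definition expect :: "real \<Rightarrow> nat \<Rightarrow> (real list \<Rightarrow> real) \<Rightarrow> real" where
  "expect eps n f = (\<Sum>ys\<in>sign_vectors n. word_prob eps ys * f ys)"

text \<open>One step of the transform: False = step 0 (componentwise product of the halves),
  True = step 1 (half the sum of the halves).\<close>
definition half_step :: "bool \<Rightarrow> real list \<Rightarrow> real list" where
  "half_step b ys = (let h = length ys div 2; y1 = take h ys; y2 = drop h ys in
     if b then map2 (\<lambda>a c. (a + c) / 2) y1 y2 else map2 (*) y1 y2)"

fun transf :: "real list \<Rightarrow> bool list \<Rightarrow> real list" where
  "transf ys [] = ys"
| "transf ys (b # bs) = transf (half_step b ys) bs"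

fun node :: "nat \<Rightarrow> nat \<Rightarrow> bool list \<Rightarrow> nat \<times> nat" where
  "node m r [] = (m, r)"
| "node m r (b # bs) = node (m - 1) (if b then r else r - 1) bs"

text \<open>xi leads from (m,r) to an end node: every proper prefix reaches an inner node
  (1 < r' < m'), and xi reaches a biorthogonal node (r' = 1) or a full-space node (r' = m').\<close>
definition end_path :: "nat \<Rightarrow> nat \<Rightarrow> bool list \<Rightarrow> bool" where
  "end_path m r xi \<longleftrightarrow>
     (\<forall>k < length xi. 1 < snd (node m r (take k xi)) \<and> snd (node m r (take k xi)) < fst (node m r (take k xi)))
     \<and> (snd (node m r xi) = 1 \<or> snd (node m r xi) = fst (node m r xi))"

text \<open>The biorthogonal code RM(1,M) in +-1 form (affine Boolean functions of the index bits).\<close>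
definition rm1 :: "nat \<Rightarrow> real list set" where
  "rm1 M = {map (\<lambda>i. s * (-1) ^ card {j. j < M \<and> bit a j \<and> bit (i::nat) j}) [0..<2 ^ M] |(a::nat) (s::real).
              a < 2 ^ M \<and> (s = 1 \<or> s = -1)}"

definition inner :: "real list \<Rightarrow> real list \<Rightarrow> real" where
  "inner u v = sum_list (map2 (*) u v)"

text \<open>Error indicator of MD decoding in RM(1,M) of input z (ties broken uniformly at random):
  one minus the probability that the all-ones word is output.\<close>
definition md_err_biorth :: "nat \<Rightarrow> real list \<Rightarrow> real" where
  "md_err_biorth M z = (let S = {c \<in> rm1 M. \<forall>c' \<in> rm1 M. inner c' z \<le> inner c z} in
     1 - (if replicate (2 ^ M) 1 \<in> S then 1 / real (card S) else 0))"

text \<open>Error indicator of a single coordinate at a full-space node (zero counted with probability 1/2).\<close>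
definition coord_err :: "real \<Rightarrow> real" where
  "coord_err x = (if x < 0 then 1 else if x = 0 then 1 / 2 else 0)"

definition eps_tilde :: "nat \<Rightarrow> real \<Rightarrow> nat \<Rightarrow> real" where
  "eps_tilde r c m = (c * real m * 2 powr (real r - real m)) powr (1 / 2 ^ r)"

definition bound :: "nat \<Rightarrow> real \<Rightarrow> nat \<Rightarrow> real" where
  "bound r c m = max (exp (- (c / 2 - ln 2) * real m)) (2 powr (- (real m - real r) / 2 + sqrt (real m)))"

end

theory Submission imports Defs "HOL-Probability.Probability" "HOL-Real_Asymp.Real_Asymp" begin

abbreviation E :: "'a pmf \<Rightarrow> ('a \<Rightarrow> real) \<Rightarrow> real" where "E p f \<equiv> measure_pmf.expectation p f"

lemma E_bind: assumes "finite (set_pmf p)" "\<And>x. x \<in> set_pmf p \<Longrightarrow> finite (set_pmf (f x))"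
  shows "E (bind_pmf p f) h = E p (\<lambda>x. E (f x) h)"
proof -
  have "E (bind_pmf p f) h = (\<Sum>a\<in>set_pmf p. pmf p a *\<^sub>R E (f a) h)"
    by (rule pmf_expectation_bind) (use assms in auto)
  also have "\<dots> = E p (\<lambda>x. E (f x) h)"
    by (subst integral_measure_pmf[of "set_pmf p"]) (use assms in auto)
  finally show ?thesis .
qed

fun iid :: "nat \<Rightarrow> 'a pmf \<Rightarrow> 'a list pmf" where
  "iid 0 p = return_pmf []"
| "iid (Suc n) p = bind_pmf p (\<lambda>x. map_pmf (Cons x) (iid n p))"

lemma iid_finite: "finite (set_pmf p) \<Longrightarrow> finite (set_pmf (iid n p))"
  by (induction n) auto

lemma iid_length: "zs \<in> set_pmf (iid n p) \<Longrightarrow> length zs = n"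
  by (induction n arbitrary: zs) auto

lemma iid_set: "zs \<in> set_pmf (iid n p) \<Longrightarrow> set zs \<subseteq> set_pmf p"
  by (induction n arbitrary: zs) fastforce+

lemma iid_add: "iid (n+k) p = bind_pmf (iid n p) (\<lambda>xs. map_pmf ((@) xs) (iid k p))"
  by (induction n) (simp_all add: map_pmf_def bind_assoc_pmf bind_return_pmf bind_return_pmf')

lemma iid_map2: "bind_pmf (iid n p) (\<lambda>xs. map_pmf (map2 f xs) (iid n q)) = iid n (bind_pmf p (\<lambda>x. map_pmf (f x) q))"
proof (induction n)
  case 0 then show ?case by (simp add: bind_return_pmf)
next
  case (Suc n)
  have "bind_pmf (iid (Suc n) p) (\<lambda>xs. map_pmf (map2 f xs) (iid (Suc n) q))
     = bind_pmf p (\<lambda>x. bind_pmf q (\<lambda>y. bind_pmf (iid n p) (\<lambda>xs. map_pmf (\<lambda>ys. f x y # map2 f xs ys) (iid n q))))"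
    by (simp add: map_pmf_def bind_assoc_pmf bind_return_pmf bind_commute_pmf[where A="iid n p" and B=q])
  also have "\<dots> = bind_pmf p (\<lambda>x. bind_pmf q (\<lambda>y. map_pmf (Cons (f x y)) (bind_pmf (iid n p) (\<lambda>xs. map_pmf (map2 f xs) (iid n q)))))"
    by (simp add: map_bind_pmf map_pmf_comp o_def)
  also have "\<dots> = iid (Suc n) (bind_pmf p (\<lambda>x. map_pmf (f x) q))"
    by (simp only: Suc) (simp add: map_pmf_def bind_assoc_pmf bind_return_pmf)
  finally show ?case .
qed

definition op :: "bool \<Rightarrow> real pmf \<Rightarrow> real pmf" where
 "op b p = bind_pmf p (\<lambda>x. map_pmf (\<lambda>y. if b then (x+y)/2 else x*y) p)"

fun Dist :: "real pmf \<Rightarrow> bool list \<Rightarrow> real pmf" where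
  "Dist p [] = p" | "Dist p (b#bs) = Dist (op b p) bs"

lemma half_iid: "map_pmf (half_step b) (iid (n+n) p) = iid n (op b p)"
proof -
  have "map_pmf (half_step b) (iid (n+n) p) = bind_pmf (iid n p) (\<lambda>xs. map_pmf (\<lambda>ys. half_step b (xs@ys)) (iid n p))"
    by (simp add: iid_add map_bind_pmf map_pmf_comp o_def)
  also have "\<dots> = bind_pmf (iid n p) (\<lambda>xs. map_pmf (map2 (\<lambda>x y. if b then (x+y)/2 else x*y) xs) (iid n p))"
    by (intro bind_pmf_cong refl map_pmf_cong) (auto simp: half_step_def iid_length)
  also have "\<dots> = iid n (op b p)" by (simp add: iid_map2 op_def)
  finally show ?thesis .
qed

lemma transf_iid: "map_pmf (\<lambda>ys. transf ys xi) (iid (2^length xi * n) p) = iid n (Dist p xi)"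
proof (induction xi arbitrary: p)
  case Nil then show ?case by simp
next
  case (Cons b bs)
  have e: "2^length (b#bs) * n = 2^length bs * n + 2^length bs*n" by simp
  have "map_pmf (\<lambda>ys. transf ys (b#bs)) (iid (2^length (b#bs) * n) p)
     = map_pmf (\<lambda>ys. transf ys bs) (map_pmf (half_step b) (iid (2^length bs * n + 2^length bs*n) p))"
    by (simp only: e map_pmf_comp transf.simps)
  also have "\<dots> = iid n (Dist p (b#bs))" by (simp only: half_iid Cons.IH Dist.simps)
  finally show ?case .
qed

definition B :: "real \<Rightarrow> real pmf" where
  "B e = map_pmf (\<lambda>b. if b then 1 else -1) (bernoulli_pmf ((1+e)/2))"

lemma B_set: "set_pmf (B e) \<subseteq> {-1,1}" by (auto simp: B_def)
lemma B_finite: "finite (set_pmf (B e))" using B_set finite_subset by blast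

lemma E_B: "-1 \<le> e \<Longrightarrow> e \<le> 1 \<Longrightarrow> E (B e) g = (1+e)/2 * g 1 + (1-e)/2 * g (-1)"
proof -
  assume a: "-1 \<le> e" "e \<le> 1"
  have "E (B e) g = g 1 * ((1+e)/2) + g (-1) * (1 - (1+e)/2)"
    unfolding B_def integral_map_pmf by (rule integral_bernoulli_pmf[where f="\<lambda>b. g (if b then 1 else -1)", simplified]) (use a in auto)
  then show ?thesis by (simp add: field_simps)
qed

lemma sv_finite: "finite (sign_vectors n)"
proof -
  have "sign_vectors n = {xs. set xs \<subseteq> {-1,1} \<and> length xs = n}" by (auto simp: sign_vectors_def)
  then show ?thesis using finite_lists_length_eq[of "{-1,1::real}" n] by simp
qed

lemma sv_Suc: "sign_vectors (Suc n) = (\<lambda>(x,xs). x#xs) ` ({-1,1} \<times> sign_vectors n)"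
  by (auto simp: sign_vectors_def length_Suc_conv image_iff)

lemma wp_Cons: "word_prob e (x#xs) = (if x = -1 then (1-e)/2 else (1+e)/2) * word_prob e xs"
  unfolding word_prob_def length_Cons prod.lessThan_Suc_shift by simp

lemma expect_iid: assumes "-1 \<le> e" "e \<le> 1" shows "expect e n f = E (iid n (B e)) f"
proof (induction n arbitrary: f)
  case 0
  have "sign_vectors 0 = {[]}" by (auto simp: sign_vectors_def)
  then show ?case by (simp add: expect_def word_prob_def)
next
  case (Suc n)
  have inj: "inj_on (\<lambda>(x,xs). x#xs) ({-1,1::real} \<times> sign_vectors n)" by (auto simp: inj_on_def)
  have "expect e (Suc n) f = (\<Sum>(x,xs)\<in>{-1,1::real} \<times> sign_vectors n. word_prob e (x#xs) * f (x#xs))"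
    unfolding expect_def sv_Suc by (subst sum.reindex[OF inj]) (simp add: case_prod_unfold)
  also have "\<dots> = (\<Sum>x\<in>{-1,1::real}. \<Sum>xs\<in>sign_vectors n. word_prob e (x#xs) * f (x#xs))"
    by (rule sum.cartesian_product[symmetric])
  also have "\<dots> = (1+e)/2 * expect e n (\<lambda>xs. f (1#xs)) + (1-e)/2 * expect e n (\<lambda>xs. f ((-1)#xs))"
    by (simp add: wp_Cons expect_def sum_distrib_left mult.assoc)
  also have "\<dots> = E (B e) (\<lambda>x. E (iid n (B e)) (\<lambda>xs. f (x#xs)))"
    using assms by (simp add: E_B Suc)
  also have "\<dots> = E (iid (Suc n) (B e)) f"
    by (simp only: iid.simps, subst E_bind) (auto simp: B_finite iid_finite)
  finally show ?case .
qed

lemma E_mono: "finite (set_pmf p) \<Longrightarrow> (\<And>x. x \<in> set_pmf p \<Longrightarrow> f x \<le> g x) \<Longrightarrow> E p f \<le> E p g"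
  by (rule integral_mono_AE) (auto simp: AE_measure_pmf_iff intro: integrable_measure_pmf_finite)

lemma E_cong: "(\<And>x. x \<in> set_pmf p \<Longrightarrow> f x = g x) \<Longrightarrow> E p f = E p g"
  by (rule integral_cong_AE) (auto simp: AE_measure_pmf_iff)

lemma E_nonneg: "(\<And>x. x \<in> set_pmf p \<Longrightarrow> 0 \<le> f x) \<Longrightarrow> 0 \<le> E p f"
  by (rule integral_nonneg_AE) (auto simp: AE_measure_pmf_iff)

lemma E_iid_prod:
  assumes "finite (set_pmf q)" "S \<subseteq> {..<n}"
  shows "E (iid n q) (\<lambda>z. \<Prod>i\<in>S. f (z!i)) = (E q f)^card S"
  using assms(2)
proof (induction n arbitrary: S)
  case 0 then show ?case by simp
next
  case (Suc n)
  define S' where "S' = {i. Suc i \<in> S}"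
  have S'sub: "S' \<subseteq> {..<n}" using Suc.prems by (auto simp: S'_def)
  have fS': "finite S'" using S'sub finite_subset by blast
  have Seq: "S = (if 0 \<in> S then insert 0 (Suc ` S') else Suc ` S')"
  proof -
    have "i \<in> S \<longleftrightarrow> (i = 0 \<and> 0 \<in> S) \<or> i \<in> Suc ` S'" for i by (cases i) (auto simp: S'_def)
    then show ?thesis by (cases "0 \<in> S") (simp_all add: set_eq_iff)
  qed
  have prodeq: "(\<Prod>i\<in>S. f ((x#zs)!i)) = (if 0 \<in> S then f x else 1) * (\<Prod>i\<in>S'. f (zs!i))" for x zs
  proof -
    have "(\<Prod>i\<in>Suc ` S'. f ((x#zs)!i)) = (\<Prod>i\<in>S'. f (zs!i))"
      by (subst prod.reindex) auto
    then show ?thesis using fS' by (subst Seq) auto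
  qed
  have cardeq: "card S = (if 0 \<in> S then 1 else 0) + card S'"
    using fS' by (subst Seq) (auto simp: card_image)
  have "E (iid (Suc n) q) (\<lambda>z. \<Prod>i\<in>S. f (z!i)) = E q (\<lambda>x. E (iid n q) (\<lambda>zs. \<Prod>i\<in>S. f ((x#zs)!i)))"
    by (simp only: iid.simps, subst E_bind) (auto simp: assms iid_finite)
  also have "\<dots> = E q (\<lambda>x. (if 0 \<in> S then f x else 1) * (E q f)^card S')"
    by (simp only: prodeq Bochner_Integration.integral_mult_right_zero Suc.IH[OF S'sub])
  also have "\<dots> = (E q f)^card S"
    by (simp add: cardeq)
  finally show ?case .
qed

definition SG :: "real pmf \<Rightarrow> real \<Rightarrow> real \<Rightarrow> bool" where
  "SG p mu v \<longleftrightarrow> (\<forall>s. E p (\<lambda>x. exp (s*(x-mu))) \<le> exp (s^2 * v / 2))"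

definition good :: "real pmf \<Rightarrow> real \<Rightarrow> real \<Rightarrow> bool" where
  "good p mu v \<longleftrightarrow> finite (set_pmf p) \<and> set_pmf p \<subseteq> {-1..1} \<and> E p (\<lambda>x. x) = mu \<and> 0 \<le> v \<and> SG p mu v"

lemma hoeff_pos:
  fixes f :: "real \<Rightarrow> real"
  assumes fin: "finite (set_pmf p)" and bd: "\<And>x. x\<in>set_pmf p \<Longrightarrow> f x \<in> {-1..1}" and l: "l > 0"
  shows "E p (\<lambda>x. exp(l*(f x - E p f))) \<le> exp(l^2/2)"
proof -
  interpret interval_bounded_random_variable "measure_pmf p" f "-1" 1
    by unfold_locales (use bd in \<open>simp_all add: AE_measure_pmf_iff\<close>)
  have "ennreal (E p (\<lambda>x. exp(l*(f x - E p f)))) = (\<integral>\<^sup>+x. ennreal (exp(l*(f x - E p f))) \<partial>measure_pmf p)"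
    by (rule nn_integral_eq_integral[symmetric]) (simp_all add: integrable_measure_pmf_finite fin)
  also have "\<dots> \<le> ennreal (exp (l^2 * (1 - -1)^2/8))" by (rule Hoeffdings_lemma_nn_integral[OF l])
  finally have "E p (\<lambda>x. exp(l*(f x - E p f))) \<le> exp (l^2 * (1 - -1)^2/8)"
    by (subst (asm) ennreal_le_iff) simp_all
  then show ?thesis by simp
qed

lemma hoeff:
  assumes fin: "finite (set_pmf p)" and bd: "set_pmf p \<subseteq> {-1..1}"
  shows "SG p (E p (\<lambda>x. x)) 1"
  unfolding SG_def
proof
  fix s :: real
  consider "s > 0" | "s = 0" | "s < 0" by linarith
  then show "E p (\<lambda>x. exp (s*(x - E p (\<lambda>x. x)))) \<le> exp (s^2*1/2)"
  proof cases
    case 1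
    have "E p (\<lambda>x. exp (s*(x - E p (\<lambda>x. x)))) \<le> exp (s^2/2)"
      by (rule hoeff_pos[of p "\<lambda>x. x" s]) (use fin bd 1 in auto)
    then show ?thesis by simp
  next
    case 2 then show ?thesis by simp
  next
    case 3
    have "E p (\<lambda>x. exp ((-s)*(-x - E p (\<lambda>x. -x)))) \<le> exp ((-s)^2/2)"
      by (rule hoeff_pos[of p "\<lambda>x. -x" "-s"]) (use fin bd 3 in auto)
    moreover have "E p (\<lambda>x. -x) = - E p (\<lambda>x. x)" by simp
    ultimately show ?thesis by (simp add: algebra_simps)
  qed
qed

lemma op_finite: "finite (set_pmf p) \<Longrightarrow> finite (set_pmf (op b p))"
  by (simp add: op_def)

lemma op_set: "z \<in> set_pmf (op b p) \<Longrightarrow> \<exists>x\<in>set_pmf p. \<exists>y\<in>set_pmf p. z = (if b then (x+y)/2 else x*y)"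
  unfolding op_def by (simp only: set_bind_pmf set_map_pmf) blast

lemma E_op: "finite (set_pmf p) \<Longrightarrow> E (op b p) h = E p (\<lambda>x. E p (\<lambda>y. h (if b then (x+y)/2 else x*y)))"
  unfolding op_def by (subst E_bind) simp_all

lemma E_lin: "finite (set_pmf p) \<Longrightarrow> E p (\<lambda>y. a * y + b) = a * E p (\<lambda>y. y) + b"
proof -
  assume f: "finite (set_pmf p)"
  have "E p (\<lambda>y. a * y + b) = E p (\<lambda>y. a * y) + E p (\<lambda>y. b)"
    by (rule Bochner_Integration.integral_add) (simp_all add: integrable_measure_pmf_finite f)
  then show ?thesis by simp
qed

lemma good_avg: assumes "good p mu v" shows "good (op True p) mu (v/2)"
proof -
  from assms have fin: "finite (set_pmf p)" and bd: "set_pmf p \<subseteq> {-1..1}" and mean: "E p (\<lambda>x. x) = mu"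
    and v0: "0 \<le> v" and sg: "\<And>s. E p (\<lambda>x. exp(s*(x-mu))) \<le> exp(s^2 * v / 2)"
    unfolding good_def SG_def by auto
  have fin': "finite (set_pmf (op True p))" using fin by (rule op_finite)
  have bd': "set_pmf (op True p) \<subseteq> {-1..1}"
  proof
    fix z assume "z \<in> set_pmf (op True p)"
    then obtain x y where "x \<in> set_pmf p" "y \<in> set_pmf p" "z = (x+y)/2" using op_set by fastforce
    moreover then have "x \<in> {-1..1}" "y \<in> {-1..1}" using bd by blast+
    ultimately show "z \<in> {-1..1}" by auto
  qed
  have "E (op True p) (\<lambda>z. z) = E p (\<lambda>x. E p (\<lambda>y. (1/2) * y + x/2))"
    using fin by (simp add: E_op add_divide_distrib add.commute)
  also have "\<dots> = E p (\<lambda>x. (1/2) * x + mu/2)"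
  proof -
    have "E p (\<lambda>y. (1/2) * y + x/2) = (1/2) * x + mu/2" for x by (simp only: E_lin[OF fin] mean)
    then show ?thesis by simp
  qed
  also have "\<dots> = (1/2) * mu + mu/2" by (metis E_lin fin mean)
  also have "\<dots> = mu" by simp
  finally have mean': "E (op True p) (\<lambda>z. z) = mu" .
  have "E (op True p) (\<lambda>z. exp (s*(z-mu))) \<le> exp (s^2 * (v/2) / 2)" for s
  proof -
    define A where "A = E p (\<lambda>y. exp((s/2)*(y-mu)))"
    have "E (op True p) (\<lambda>z. exp (s*(z-mu))) = E p (\<lambda>x. E p (\<lambda>y. exp((s/2)*(x-mu)) * exp((s/2)*(y-mu))))"
      using fin by (simp add: E_op exp_add[symmetric] algebra_simps diff_divide_distrib add_divide_distrib)
    also have "\<dots> = E p (\<lambda>x. exp((s/2)*(x-mu)) * A)" unfolding A_def by simp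
    also have "\<dots> = A * A" unfolding A_def by simp
    also have "\<dots> \<le> exp((s/2)^2 * v / 2) * exp((s/2)^2 * v / 2)"
      using sg[of "s/2"] by (intro mult_mono) (auto simp: A_def intro!: E_nonneg)
    also have "\<dots> = exp (s^2 * (v/2) / 2)" by (simp add: exp_add[symmetric] power2_eq_square field_simps)
    finally show ?thesis .
  qed
  then show ?thesis using fin' bd' mean' v0 unfolding good_def SG_def by auto
qed


lemma good_prod: assumes "good p mu v" shows "good (op False p) (mu^2) (min 1 (v * (1+mu^2)))"
proof -
  from assms have fin: "finite (set_pmf p)" and bd: "set_pmf p \<subseteq> {-1..1}" and mean: "E p (\<lambda>x. x) = mu"
    and v0: "0 \<le> v" and sg: "\<And>s. E p (\<lambda>x. exp(s*(x-mu))) \<le> exp(s^2 * v / 2)"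
    unfolding good_def SG_def by auto
  have fin': "finite (set_pmf (op False p))" using fin by (rule op_finite)
  have bd': "set_pmf (op False p) \<subseteq> {-1..1}"
  proof
    fix z assume "z \<in> set_pmf (op False p)"
    then obtain x y where "x \<in> set_pmf p" "y \<in> set_pmf p" "z = x*y" using op_set by fastforce
    moreover then have "\<bar>x\<bar> \<le> 1" "\<bar>y\<bar> \<le> 1" using bd by fastforce+
    ultimately have "\<bar>z\<bar> \<le> 1" by (simp add: abs_mult mult_le_one)
    then show "z \<in> {-1..1}" by auto
  qed
  have "E (op False p) (\<lambda>z. z) = E p (\<lambda>x. E p (\<lambda>y. x * y))"
    using fin by (simp add: E_op)
  also have "\<dots> = E p (\<lambda>x. x * mu)" by (simp add: mean)
  also have "\<dots> = mu^2" by (simp add: mean power2_eq_square)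
  finally have mean': "E (op False p) (\<lambda>z. z) = mu^2" .
  have sg1: "SG (op False p) (mu^2) 1" using hoeff[OF fin' bd'] mean' by simp
  have sg2: "E (op False p) (\<lambda>z. exp (s*(z-mu^2))) \<le> exp (s^2 * (v * (1+mu^2)) / 2)" for s
  proof -
    have "E (op False p) (\<lambda>z. exp (s*(z-mu^2))) = E p (\<lambda>x. E p (\<lambda>y. exp((s*mu)*(x-mu)) * exp((s*x)*(y-mu))))"
      using fin by (simp add: E_op exp_add[symmetric] algebra_simps power2_eq_square)
    also have "\<dots> = E p (\<lambda>x. exp((s*mu)*(x-mu)) * E p (\<lambda>y. exp((s*x)*(y-mu))))" by simp
    also have "\<dots> \<le> E p (\<lambda>x. exp((s*mu)*(x-mu)) * exp(s^2 * v / 2))"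
    proof (rule E_mono[OF fin])
      fix x assume x: "x \<in> set_pmf p"
      then have "\<bar>x\<bar> \<le> 1" using bd by fastforce
      then have "x^2 \<le> 1" by (simp add: abs_square_le_1)
      then have "x^2 * v \<le> v" using v0 by (simp add: mult_left_le_one_le)
      then have "s^2 * (x^2 * v) \<le> s^2 * v" by (simp add: mult_left_mono)
      then have "(s*x)^2 * v / 2 \<le> s^2 * v / 2"
        by (simp add: power_mult_distrib mult.assoc)
      then have "E p (\<lambda>y. exp((s*x)*(y-mu))) \<le> exp(s^2 * v / 2)" using sg[of "s*x"] by (meson exp_le_cancel_iff order_trans)
      then show "exp((s*mu)*(x-mu)) * E p (\<lambda>y. exp((s*x)*(y-mu))) \<le> exp((s*mu)*(x-mu)) * exp(s^2 * v / 2)"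
        by (simp add: mult_left_mono)
    qed
    also have "\<dots> = E p (\<lambda>x. exp((s*mu)*(x-mu))) * exp(s^2 * v / 2)" by simp
    also have "\<dots> \<le> exp((s*mu)^2 * v / 2) * exp(s^2 * v / 2)"
      using sg[of "s*mu"] by (simp add: mult_right_mono)
    also have "\<dots> = exp (s^2 * (v * (1+mu^2)) / 2)" by (simp add: exp_add[symmetric] power_mult_distrib field_simps)
    finally show ?thesis .
  qed
  have "SG (op False p) (mu^2) (min 1 (v * (1+mu^2)))"
  proof (cases "v * (1+mu^2) \<le> 1")
    case True then show ?thesis using sg2 by (simp add: SG_def min_absorb2)
  next
    case False then show ?thesis using sg1 by (simp add: SG_def min_absorb1)
  qed
  moreover have "0 \<le> min 1 (v * (1+mu^2))" using v0 by simp
  ultimately show ?thesis using fin' bd' mean' unfolding good_def by auto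
qed


definition par :: "nat \<Rightarrow> nat \<Rightarrow> nat \<Rightarrow> nat" where
  "par M a i = card {j. j < M \<and> bit a j \<and> bit i j}"

lemma card_Suc_split: "card {j. j < Suc M \<and> P j} = (if P 0 then 1 else 0) + card {j. j < M \<and> P (Suc j)}"
proof -
  have e: "{j. j < Suc M \<and> P j} = (if P 0 then {0} else {}) \<union> Suc ` {j. j < M \<and> P (Suc j)}"
  proof -
    have "i \<in> {j. j < Suc M \<and> P j} \<longleftrightarrow> i \<in> (if P 0 then {0} else {}) \<union> Suc ` {j. j < M \<and> P (Suc j)}" for i
      by (cases i) auto
    then show ?thesis by blast
  qed
  show ?thesis unfolding e by (subst card_Un_disjoint) (auto simp: card_image)
qed

lemma sum_pairs: "(\<Sum>i<2*(n::nat). f i) = (\<Sum>i<n. f (2*i) + f (2*i+1)::real)"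
  by (induction n) (simp_all add: algebra_simps)

lemma par_Suc: "par (Suc M) a i = (if odd a \<and> odd i then 1 else 0) + par M (a div 2) (i div 2)"
  unfolding par_def by (subst card_Suc_split) (simp add: bit_0 bit_Suc)

lemma char_sum: "a < 2^M \<Longrightarrow> a \<noteq> 0 \<Longrightarrow> (\<Sum>i<2^M. (-1::real)^par M a i) = 0"
proof (induction M arbitrary: a)
  case 0 then show ?case by simp
next
  case (Suc M)
  have "(\<Sum>i<2^Suc M. (-1::real)^par (Suc M) a i) = (\<Sum>i<2^M. (-1::real)^par (Suc M) a (2*i) + (-1)^par (Suc M) a (2*i+1))"
    by (simp add: sum_pairs)
  also have "\<dots> = (\<Sum>i<2^M. (1 + (if odd a then -1 else 1)) * (-1::real)^par M (a div 2) i)"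
    by (intro sum.cong refl) (simp add: par_Suc algebra_simps)
  also have "\<dots> = 0"
  proof (cases "odd a")
    case True then show ?thesis by simp
  next
    case False
    then have "a div 2 \<noteq> 0" "a div 2 < 2^M" using Suc.prems by auto
    then show ?thesis using False Suc.IH[of "a div 2"] by (simp add: sum_distrib_left[symmetric])
  qed
  finally show ?case .
qed


definition chi :: "nat \<Rightarrow> nat \<Rightarrow> real \<Rightarrow> nat \<Rightarrow> real" where "chi M a s i = s * (-1)^par M a i"
definition cw :: "nat \<Rightarrow> nat \<Rightarrow> real \<Rightarrow> real list" where "cw M a s = map (chi M a s) [0..<2^M]"
definition Dset :: "nat \<Rightarrow> nat \<Rightarrow> real \<Rightarrow> nat set" where "Dset M a s = {i. i < 2^M \<and> chi M a s i = -1}"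
definition Iset :: "nat \<Rightarrow> (nat \<times> real) set" where "Iset M = ({..<2^M} \<times> {1,-1}) - {(0,1)}"

lemma rm1_eq: "rm1 M = (\<lambda>(a,s). cw M a s) ` ({..<2^M} \<times> {1,-1})"
  unfolding rm1_def cw_def chi_def par_def by (auto simp: image_iff)

lemma inner_map: "length z = N \<Longrightarrow> Defs.inner (map h [0..<N]) z = (\<Sum>i<N. h i * z!i)"
proof -
  assume l: "length z = N"
  have "map2 (*) (map h [0..<N]) z = map (\<lambda>i. h i * z!i) [0..<N]"
    by (rule nth_equalityI) (simp_all add: l)
  then show ?thesis unfolding Defs.inner_def
    by (simp add: sum_set_upt_conv_sum_list_nat[symmetric] atLeast0LessThan)
qed

lemma ones_cw: "cw M 0 1 = replicate (2^M) 1"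
  by (rule nth_equalityI) (simp_all add: cw_def chi_def par_def)

lemma chi_pm: "s = 1 \<or> s = -1 \<Longrightarrow> chi M a s i = 1 \<or> chi M a s i = -1"
  by (cases "even (par M a i)") (auto simp: chi_def)

lemma inner_diff:
  assumes "length z = 2^M" "s = 1 \<or> s = -1"
  shows "Defs.inner (cw M a s) z - Defs.inner (replicate (2^M) 1) z = -2 * (\<Sum>i\<in>Dset M a s. z!i)"
proof -
  have "Defs.inner (cw M a s) z - Defs.inner (replicate (2^M) 1) z = (\<Sum>i<2^M. (chi M a s i - 1) * z!i)"
    unfolding ones_cw[symmetric] by (simp add: cw_def inner_map assms chi_def par_def sum_subtractf algebra_simps)
  also have "\<dots> = (\<Sum>i<2^M. if chi M a s i = -1 then -2 * z!i else 0)"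
    by (intro sum.cong refl) (use chi_pm[OF assms(2)] in auto)
  also have "\<dots> = (\<Sum>i\<in>{..<2^M} \<inter> {i. chi M a s i = -1}. -2 * z!i)"
    by (simp only: sum.If_cases finite_lessThan) simp
  also have "\<dots> = (\<Sum>i\<in>Dset M a s. -2 * z!i)"
    by (rule sum.cong) (auto simp: Dset_def)
  also have "\<dots> = -2 * (\<Sum>i\<in>Dset M a s. z!i)"
    by (simp add: sum_distrib_left)
  finally show ?thesis .
qed

lemma card_Dset: assumes "(a,s) \<in> Iset M" shows "2^M \<le> 2 * card (Dset M a s)"
proof (cases "a = 0")
  case True
  then have "s = -1" using assms by (auto simp: Iset_def)
  then have "Dset M a s = {..<2^M}" using True by (auto simp: Dset_def chi_def par_def)
  then show ?thesis by simp
next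
  case False
  have a: "a < 2^M" and s: "s = 1 \<or> s = -1" using assms by (auto simp: Iset_def)
  have "0 = (\<Sum>i<2^M. chi M a s i)" using char_sum[OF a False] by (simp add: chi_def sum_distrib_left[symmetric])
  also have "\<dots> = (\<Sum>i<2^M. 1 - (if i \<in> Dset M a s then 2 else 0))"
    by (intro sum.cong refl) (use chi_pm[OF s] in \<open>auto simp: Dset_def\<close>)
  also have "\<dots> = 2^M - 2 * real (card (Dset M a s))"
  proof -
    have "Dset M a s \<subseteq> {..<2^M}" by (auto simp: Dset_def)
    then have "(\<Sum>i<2^M. (if i \<in> Dset M a s then 2 else 0::real)) = 2 * real (card (Dset M a s))"
      by (simp add: sum.If_cases Int_absorb1)
    then show ?thesis by (simp add: sum_subtractf)
  qed
  finally have "real (2^M) = 2 * real (card (Dset M a s))" by simp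
  then show ?thesis by linarith
qed

lemma card_Iset: "card (Iset M) = 2 * 2^M - 1"
proof -
  have "card ({..<(2::nat)^M} \<times> {1,-1::real}) = 2 * 2^M" by (simp add: card_cartesian_product)
  then show ?thesis unfolding Iset_def by (subst card_Diff_singleton) auto
qed


lemma md_bound:
  assumes len: "length z = 2^M" and t: "0 \<le> t"
  shows "md_err_biorth M z \<le> (\<Sum>(a,s)\<in>Iset M. exp (-t * (\<Sum>i\<in>Dset M a s. z!i)))"
proof -
  define S where "S = {c \<in> rm1 M. \<forall>c'\<in>rm1 M. Defs.inner c' z \<le> Defs.inner c z}"
  define ones where "ones = replicate (2^M) (1::real)"
  have finR: "finite (rm1 M)" by (simp add: rm1_eq)
  have onesR: "ones \<in> rm1 M" unfolding rm1_eq ones_def ones_cw[symmetric] by (auto simp: image_iff)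
  have finS: "finite S" using finR by (simp add: S_def)
  have finI: "finite (Iset M)" by (simp add: Iset_def)
  have nonneg: "0 \<le> (\<Sum>(a,s)\<in>Iset M. exp (-t * (\<Sum>i\<in>Dset M a s. z!i)))"
    by (intro sum_nonneg) auto
  have err: "md_err_biorth M z = 1 - (if ones \<in> S then 1 / card S else 0)"
    by (simp add: md_err_biorth_def S_def ones_def Let_def)
  show ?thesis
  proof (cases "ones \<in> S \<and> card S = 1")
    case True then show ?thesis using err nonneg by simp
  next
    case False
    have le1: "md_err_biorth M z \<le> 1" by (simp add: err)
    obtain c where cS: "c \<in> S" and cne: "c \<noteq> ones"
    proof (cases "ones \<in> S")
      case True
      with False have "card S \<noteq> 1" by simp
      moreover have "\<exists>c\<in>S. c \<noteq> ones"
      proof (rule ccontr)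
        assume "\<not> (\<exists>c\<in>S. c \<noteq> ones)"
        then have "S = {ones}" using True by blast
        with \<open>card S \<noteq> 1\<close> show False by simp
      qed
      then obtain c' where "c' \<in> S" "c' \<noteq> ones" by blast
      then show ?thesis by (rule that)
    next
      case False
      define m where "m = Max ((\<lambda>c. Defs.inner c z) ` rm1 M)"
      have "m \<in> (\<lambda>c. Defs.inner c z) ` rm1 M" unfolding m_def using finR onesR by (intro Max_in) auto
      then obtain c where c: "c \<in> rm1 M" "Defs.inner c z = m" by blast
      have "\<forall>c'\<in>rm1 M. Defs.inner c' z \<le> m" unfolding m_def using finR by (auto intro!: Max_ge)
      then have "c \<in> S" using c by (simp add: S_def)
      moreover have "c \<noteq> ones" using False \<open>c \<in> S\<close> by blast
      ultimately show ?thesis by (rule that)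
    qed
    from cS have "c \<in> rm1 M" by (simp add: S_def)
    then obtain p where p: "p \<in> {..<2^M} \<times> {1,-1}" "c = (\<lambda>(a,s). cw M a s) p" unfolding rm1_eq by (rule imageE)
    obtain a s where as: "(a,s) \<in> {..<2^M} \<times> {1,-1}" and c: "c = cw M a s" using p by (cases p) simp
    have "(a,s) \<noteq> (0,1)"
    proof
      assume "(a,s) = (0,1)"
      then have "c = ones" using c ones_cw[of M] ones_def by simp
      with cne show False ..
    qed
    then have asI: "(a,s) \<in> Iset M" using as by (simp add: Iset_def)
    have "Defs.inner ones z \<le> Defs.inner c z" using cS onesR by (simp add: S_def)
    moreover have "s = 1 \<or> s = -1" using as by auto
    ultimately have "Defs.inner (replicate (2^M) 1) z \<le> Defs.inner (cw M a s) z" "s = 1 \<or> s = -1"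
      using c ones_def by simp_all
    then have "(\<Sum>i\<in>Dset M a s. z!i) \<le> 0" using inner_diff[OF len, of s a] by linarith
    then have "1 \<le> exp (-t * (\<Sum>i\<in>Dset M a s. z!i))" using t by (simp add: mult_nonneg_nonpos)
    also have "\<dots> \<le> (\<Sum>(a,s)\<in>Iset M. exp (-t * (\<Sum>i\<in>Dset M a s. z!i)))"
    proof -
      have "(\<lambda>(a,s). exp (-t * (\<Sum>i\<in>Dset M a s. z!i))) (a,s) \<le> (\<Sum>(a,s)\<in>Iset M. exp (-t * (\<Sum>i\<in>Dset M a s. z!i)))"
        by (rule member_le_sum[OF asI _ finI]) auto
      then show ?thesis by simp
    qed
    finally show ?thesis using le1 by linarith
  qed
qed


lemma chernoff1:
  assumes "good D mu V" "0 < V"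
  shows "E D (\<lambda>x. exp (-(mu/V) * x)) \<le> exp (-(mu^2/(2*V)))"
proof -
  have fin: "finite (set_pmf D)" and sg: "E D (\<lambda>x. exp (-(mu/V)*(x-mu))) \<le> exp ((-(mu/V))^2 * V / 2)"
    using assms(1) unfolding good_def SG_def by blast+
  have "E D (\<lambda>x. exp (-(mu/V) * x)) = E D (\<lambda>x. exp (-(mu/V)*(x-mu)) * exp (-(mu/V)*mu))"
    by (intro E_cong) (simp add: exp_add[symmetric] field_simps diff_divide_distrib)
  also have "\<dots> = E D (\<lambda>x. exp (-(mu/V)*(x-mu))) * exp (-(mu/V)*mu)" by simp
  also have "\<dots> \<le> exp ((-(mu/V))^2 * V / 2) * exp (-(mu/V)*mu)" using sg by simp
  also have "\<dots> = exp (-(mu^2/(2*V)))" using assms(2) by (simp add: exp_add[symmetric] power2_eq_square field_simps)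
  finally show ?thesis .
qed

lemma coord_err_le: "0 \<le> t \<Longrightarrow> coord_err x \<le> exp (-t * x)"
  by (auto simp: coord_err_def mult_nonneg_nonpos)

lemma full_prob:
  assumes "good D mu V" "0 < V" "0 \<le> mu" "\<sigma> < n"
  shows "E (iid n D) (\<lambda>z. coord_err (z!\<sigma>)) \<le> exp (-(mu^2/(2*V)))"
proof -
  have fin: "finite (set_pmf D)" using assms(1) by (simp add: good_def)
  have "E (iid n D) (\<lambda>z. coord_err (z!\<sigma>)) = E (iid n D) (\<lambda>z. \<Prod>i\<in>{\<sigma>}. coord_err (z!i))" by simp
  also have "\<dots> = E D coord_err" using E_iid_prod[OF fin, of "{\<sigma>}" n coord_err] assms(4) by simp
  also have "\<dots> \<le> E D (\<lambda>x. exp (-(mu/V) * x))"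
    by (rule E_mono[OF fin]) (rule coord_err_le, use assms in simp)
  also have "\<dots> \<le> exp (-(mu^2/(2*V)))" by (rule chernoff1[OF assms(1,2)])
  finally show ?thesis .
qed

lemma bio_prob:
  assumes "good D mu V" "0 < V" "0 \<le> mu"
  shows "E (iid (2^Suc g) D) (md_err_biorth (Suc g)) \<le> (2*2^Suc g - 1) * exp (-(2^g * mu^2/(2*V)))"
proof -
  define M where "M = Suc g"
  define t where "t = mu/V"
  define q where "q = exp (-(mu^2/(2*V)))"
  have t0: "0 \<le> t" using assms by (simp add: t_def)
  have fin: "finite (set_pmf D)" using assms(1) by (simp add: good_def)
  have finI: "finite (set_pmf (iid (2^M) D))" by (simp add: iid_finite fin)
  have finIs: "finite (Iset M)" by (simp add: Iset_def)
  have Dsub: "Dset M a s \<subseteq> {..<2^M}" for a s by (auto simp: Dset_def)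
  have q1: "q \<le> 1" "0 \<le> q" using assms by (auto simp: q_def)
  have ch: "E D (\<lambda>x. exp (-t * x)) \<le> q" unfolding t_def q_def by (rule chernoff1[OF assms(1,2)])
  have "E (iid (2^M) D) (md_err_biorth M) \<le> E (iid (2^M) D) (\<lambda>z. \<Sum>(a,s)\<in>Iset M. exp (-t * (\<Sum>i\<in>Dset M a s. z!i)))"
    by (rule E_mono[OF finI]) (rule md_bound[OF iid_length t0])
  also have "\<dots> = E (iid (2^M) D) (\<lambda>z. \<Sum>(a,s)\<in>Iset M. \<Prod>i\<in>Dset M a s. exp (-t * (z!i)))"
    by (simp add: exp_sum sum_distrib_left finite_subset[OF Dsub])
  also have "\<dots> = (\<Sum>(a,s)\<in>Iset M. E (iid (2^M) D) (\<lambda>z. \<Prod>i\<in>Dset M a s. exp (-t * (z!i))))"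
    unfolding case_prod_unfold
    by (rule Bochner_Integration.integral_sum) (simp add: integrable_measure_pmf_finite finI)
  also have "\<dots> = (\<Sum>(a,s)\<in>Iset M. (E D (\<lambda>x. exp (-t * x)))^card (Dset M a s))"
    unfolding case_prod_unfold by (intro sum.cong refl E_iid_prod[OF fin Dsub])
  also have "\<dots> \<le> (\<Sum>(a,s)\<in>Iset M. q ^ 2^g)"
  proof (rule sum_mono)
    fix p assume p: "p \<in> Iset M"
    obtain a s where as: "p = (a,s)" by (cases p)
    have "2^M \<le> 2 * card (Dset M a s)" using card_Dset p as by simp
    then have cd: "2^g \<le> card (Dset M a s)" by (simp add: M_def)
    have "(E D (\<lambda>x. exp (-t * x)))^card (Dset M a s) \<le> q^card (Dset M a s)"
      by (rule power_mono[OF ch]) (rule E_nonneg, simp)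
    also have "\<dots> \<le> q ^ 2^g" by (rule power_decreasing[OF cd q1(2) q1(1)])
    finally show "(\<lambda>(a,s). (E D (\<lambda>x. exp (-t * x)))^card (Dset M a s)) p \<le> (\<lambda>(a,s). q ^ 2^g) p"
      using as by simp
  qed
  also have "\<dots> = (2*2^M - 1) * q^2^g" by (simp add: card_Iset)
  also have "q^2^g = exp (-(2^g * mu^2/(2*V)))"
    unfolding q_def by (simp add: exp_of_nat_mult[symmetric])
  finally show ?thesis by (simp add: M_def)
qed


fun zeros :: "bool list \<Rightarrow> nat" where "zeros [] = 0" | "zeros (b#bs) = (if b then 0 else 1) + zeros bs"
fun ones :: "bool list \<Rightarrow> nat" where "ones [] = 0" | "ones (b#bs) = (if b then 1 else 0) + ones bs"

lemma zo_len: "zeros xi + ones xi = length xi" by (induction xi) auto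
lemma zeros_app: "zeros (xs @ ys) = zeros xs + zeros ys" by (induction xs) auto

lemma node_eq: "node m r xi = (m - length xi, r - zeros xi)"
  by (induction xi arbitrary: m r) auto

lemma good_B: "0 \<le> e \<Longrightarrow> e \<le> 1 \<Longrightarrow> good (B e) e 1"
proof -
  assume e: "0 \<le> e" "e \<le> 1"
  have fin: "finite (set_pmf (B e))" by (rule B_finite)
  have bd: "set_pmf (B e) \<subseteq> {-1..1}" using B_set by fastforce
  have mean: "E (B e) (\<lambda>x. x) = e" using e by (simp add: E_B field_simps)
  show ?thesis using hoeff[OF fin bd] fin bd mean unfolding good_def by simp
qed

lemma good_Dist:
  assumes "good p mu v" "0 \<le> mu" "mu \<le> 1" "0 < v"
  shows "\<exists>v'. good (Dist p xi) (mu^(2^zeros xi)) v' \<and> 0 < v' \<and> v' \<le> v * (1+mu^2)^zeros xi / 2^ones xi \<and> (v \<le> 1 \<longrightarrow> v' \<le> 1)"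
  using assms
proof (induction xi arbitrary: p mu v)
  case Nil then show ?case by auto
next
  case (Cons b bs)
  show ?case
  proof (cases b)
    case True
    have g: "good (op True p) mu (v/2)" by (rule good_avg[OF Cons.prems(1)])
    obtain v' where v': "good (Dist (op True p) bs) (mu^(2^zeros bs)) v'" "0 < v'"
      "v' \<le> (v/2) * (1+mu^2)^zeros bs / 2^ones bs" "v/2 \<le> 1 \<longrightarrow> v' \<le> 1"
      using Cons.IH[OF g Cons.prems(2,3)] Cons.prems(4) by auto
    show ?thesis using v' True by (intro exI[of _ v']) auto
  next
    case False
    define w where "w = min 1 (v * (1+mu^2))"
    have g: "good (op False p) (mu^2) w" unfolding w_def by (rule good_prod[OF Cons.prems(1)])
    have w0: "0 < w" "w \<le> 1" "w \<le> v * (1+mu^2)" using Cons.prems(4) by (auto simp: w_def add_pos_nonneg)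
    have m2: "0 \<le> mu^2" "mu^2 \<le> 1" using Cons.prems(2,3) by (auto simp: power_le_one)
    obtain v' where v': "good (Dist (op False p) bs) ((mu^2)^(2^zeros bs)) v'" "0 < v'"
      "v' \<le> w * (1+(mu^2)^2)^zeros bs / 2^ones bs" "w \<le> 1 \<longrightarrow> v' \<le> 1"
      using Cons.IH[OF g m2 w0(1)] by auto
    have "(mu^2)^2 \<le> mu^2" using m2 mult_left_le_one_le[of "mu^2" "mu^2"] by (simp add: power2_eq_square)
    then have "(1+(mu^2)^2)^zeros bs \<le> (1+mu^2)^zeros bs" by (intro power_mono) auto
    then have "w * (1+(mu^2)^2)^zeros bs \<le> (v * (1+mu^2)) * (1+mu^2)^zeros bs"
      using w0 by (intro mult_mono) auto
    then have "v' \<le> v * (1+mu^2)^zeros (b#bs) / 2^ones (b#bs)"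
      using v'(3) False by (simp add: divide_right_mono mult.assoc order_trans)
    moreover have "(mu^2)^(2^zeros bs) = mu^(2^zeros (b#bs))" using False by (simp add: power_mult[symmetric] mult.commute)
    ultimately show ?thesis using v' w0 False by (intro exI[of _ v']) auto
  qed
qed


lemma zeros_le: "zeros xi \<le> length xi" using zo_len[of xi] by linarith

lemma last_step:
  assumes "end_path m r xi" "xi \<noteq> []"
  shows "1 < r - zeros (take (length xi - 1) xi) \<and> r - zeros (take (length xi - 1) xi) < m - (length xi - 1)"
proof -
  have "length xi - 1 < length xi" using assms(2) by simp
  then have "1 < snd (node m r (take (length xi - 1) xi)) \<and> snd (node m r (take (length xi - 1) xi)) < fst (node m r (take (length xi - 1) xi))"
    using assms(1) unfolding end_path_def by blast
  moreover have "min (length xi) (length xi - 1) = length xi - 1" by simp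
  ultimately show ?thesis by (simp add: node_eq)
qed

lemma bio_path:
  assumes "end_path m r xi" "2 \<le> r" "snd (node m r xi) = 1"
  shows "zeros xi = r - 1" "length xi + 2 \<le> m"
proof -
  show z: "zeros xi = r - 1" using assms(2,3) by (simp add: node_eq)
  then have "xi \<noteq> []" using assms(2) by auto
  from last_step[OF assms(1) this] have "r - zeros (take (length xi - 1) xi) < m - (length xi - 1)"
    "1 < r - zeros (take (length xi - 1) xi)" by auto
  then show "length xi + 2 \<le> m" by linarith
qed

lemma full_path:
  assumes "end_path m r xi" "2 \<le> r" "r < m" "snd (node m r xi) = fst (node m r xi)"
  shows "zeros xi + 2 \<le> r" "ones xi = m - r" "length xi + 2 \<le> m"
proof -
  have ne: "xi \<noteq> []" using assms(3,4) by (auto simp: node_eq)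
  define k where "k = length xi - 1"
  define z where "z = zeros (take k xi)"
  have st: "1 < r - z" "r - z < m - k" using last_step[OF assms(1) ne] by (auto simp: k_def z_def)
  have xi_eq: "xi = take k xi @ [last xi]" using ne unfolding k_def butlast_conv_take[symmetric] by simp
  have len: "length xi = k + 1" using ne by (simp add: k_def)
  have zx: "zeros xi = z + (if last xi then 0 else 1)" by (subst xi_eq) (simp add: zeros_app z_def)
  have eq: "r - zeros xi = m - length xi" using assms(4) by (simp add: node_eq)
  have lt: "last xi" using st eq zx len by (cases "last xi") auto
  have zz: "zeros xi = z" using zx lt by simp
  show "zeros xi + 2 \<le> r" using st zz by linarith
  show "length xi + 2 \<le> m" using st zz eq len by linarith
  show "ones xi = m - r" using st zz eq len zo_len[of xi] by linarith
qed


lemma expect_transf: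
  assumes "0 \<le> e" "e \<le> 1" "length xi \<le> m"
  shows "expect e (2^m) (\<lambda>ys. G (transf ys xi)) = E (iid (2^(m - length xi)) (Dist (B e) xi)) G"
proof -
  have m: "(2::nat)^m = 2^length xi * 2^(m - length xi)" using assms(3) by (simp add: power_add[symmetric])
  have "expect e (2^m) (\<lambda>ys. G (transf ys xi)) = E (iid (2^m) (B e)) (\<lambda>ys. G (transf ys xi))"
    using assms by (simp add: expect_iid)
  also have "\<dots> = E (map_pmf (\<lambda>ys. transf ys xi) (iid (2^length xi * 2^(m - length xi)) (B e))) G"
    by (simp only: m integral_map_pmf)
  also have "\<dots> = E (iid (2^(m - length xi)) (Dist (B e) xi)) G" by (simp only: transf_iid)
  finally show ?thesis .
qed


lemma bio_final:
  fixes g k m r :: nat and c X V Q :: real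
  assumes V0: "0 < V" and gX: "2^g * X = c*m/2^k" and Q1: "1 \<le> Q" and c0: "0 < c"
    and lnb: "c*m/2 - c*m/(2*Q) \<le> ln 2" and gm: "g + r + k = m" and r2: "2 \<le> r"
    and Vb: "(k = 0 \<and> V \<le> 1) \<or> (1 \<le> k \<and> V \<le> Q/2^k)"
  shows "(2*2^Suc g - 1) * exp(-(2^g*X/(2*V))) < 2^m * exp(-(c*m/2))"
proof -
  have cm: "0 \<le> c*m" using c0 by simp
  consider "k = 0" "V \<le> 1" | "1 \<le> k" "V \<le> Q/2^k" using Vb by blast
  then show ?thesis
  proof cases
    case 1
    have "c*m/2 \<le> c*m/(2*V)" using V0 1 cm by (intro divide_left_mono) auto
    then have ex: "exp(-(2^g*X/(2*V))) \<le> exp(-(c*m/2))" using gX 1 by simp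
    have "(2::real)*2^Suc g = 2^(g+2)" by simp
    also have "\<dots> \<le> 2^m" using gm r2 by (intro power_increasing) auto
    finally have "(2*2^Suc g - 1::real) < 2^m" by simp
    then have "(2*2^Suc g - 1) * exp(-(2^g*X/(2*V))) < 2^m * exp(-(2^g*X/(2*V)))" by simp
    also have "\<dots> \<le> 2^m * exp(-(c*m/2))" using ex by simp
    finally show ?thesis .
  next
    case 2
    have pk: "(0::real) < 2^k" by simp
    have "2^g*X/(2*V) = (c*m/2^k)/(2*V)" using gX by simp
    also have "\<dots> \<ge> (c*m/2^k)/(2*(Q/2^k))"
      using 2 V0 cm by (intro divide_left_mono mult_left_mono mult_pos_pos) auto
    finally have "c*m/(2*Q) \<le> 2^g*X/(2*V)" using pk by (simp add: field_simps)
    then have ex: "exp(-(2^g*X/(2*V))) \<le> exp(-(c*m/(2*Q)))" by simp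
    also have "exp(-(c*m/(2*Q))) \<le> exp(ln 2 - c*m/2)" using lnb by simp
    also have "\<dots> = 2 * exp(-(c*m/2))" using exp_add[of "ln 2" "-(c*m/2)"] by simp
    finally have ex2: "exp(-(2^g*X/(2*V))) \<le> 2 * exp(-(c*m/2))" .
    have "(2::real)*2^Suc g = 2^(g+2)" by simp
    also have "\<dots> \<le> 2^(m-1)" using gm r2 2 by (intro power_increasing) auto
    finally have "(2*2^Suc g - 1::real) < 2^(m-1)" by simp
    then have "(2*2^Suc g - 1) * exp(-(2^g*X/(2*V))) < 2^(m-1) * exp(-(2^g*X/(2*V)))" by simp
    also have "\<dots> \<le> 2^(m-1) * (2 * exp(-(c*m/2)))" using ex2 by simp
    also have "\<dots> = 2^m * exp(-(c*m/2))"
    proof -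
      have "m = Suc (m-1)" using gm r2 by simp
      then have "(2::real)^m = 2 * 2^(m-1)" by (metis power_Suc)
      then show ?thesis by simp
    qed
    finally show ?thesis .
  qed
qed

lemma main_step:
  fixes r m :: nat and c X e :: real
  assumes r2: "2 \<le> r" and c0: "0 < c" and rm: "r + 2 < m"
    and Xd: "X = c * real m * 2 powr (real r - real m)" and X1: "X < 1"
    and ed: "e = eps_tilde r c m"
    and cond3: "c * m * (r - 1) * e^2 / 2 \<le> ln 2"
    and cond4: "(c/2 - ln 2) * m < sqrt X * 2^(m-r) / 2^(r+1)"
  shows "\<forall>xi. end_path m r xi \<longrightarrow>
            (snd (node m r xi) = 1 \<longrightarrow>
               expect e (2 ^ m)
                 (\<lambda>ys. md_err_biorth (fst (node m r xi)) (transf ys xi)) < bound r c m)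
          \<and> (snd (node m r xi) = fst (node m r xi) \<longrightarrow>
               (\<forall>\<sigma> < 2 ^ fst (node m r xi).
                  expect e (2 ^ m) (\<lambda>ys. coord_err (transf ys xi ! \<sigma>)) < bound r c m))"
proof (intro allI impI conjI)
  have X0: "0 < X" using Xd c0 rm by simp
  have epow: "e^n = X powr (real n / 2^r)" for n
    unfolding ed eps_tilde_def Xd[symmetric] using X0 by (subst powr_power) (simp_all)
  have e0: "0 < e" unfolding ed eps_tilde_def Xd[symmetric] using X0 by simp
  have e1: "e < 1"
  proof -
    have "X powr (1/2^r) < 1 powr (1/2^r)" by (rule powr_less_mono2) (use X0 X1 in auto)
    then show ?thesis unfolding ed eps_tilde_def Xd[symmetric] by simp
  qed
  have eX: "e^(2^r) = X" using epow[of "2^r"] X0 by simp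
  have eS: "e^(2^(r-1)) = sqrt X"
  proof -
    from r2 obtain r' where r': "r = Suc r'" by (cases r) auto
    have "real (2^(r-1)) / 2^r = 1/2" using r' by simp
    then show ?thesis using epow[of "2^(r-1)"] X0 by (simp add: powr_half_sqrt)
  qed
  have bnd: "exp (-(c/2 - ln 2) * real m) \<le> bound r c m" by (simp add: bound_def)
  have c'eq: "exp (-(c/2 - ln 2) * real m) = 2^m * exp (-(c*m/2))"
  proof -
    have "exp (-(c/2 - ln 2) * real m) = exp (real m * ln 2) * exp (-(c*m/2))"
      by (simp add: exp_add[symmetric] algebra_simps)
    also have "exp (real m * ln 2) = 2^m" by (simp add: exp_of_nat_mult)
    finally show ?thesis .
  qed
  have good0: "good (B e) e 1" using e0 e1 by (intro good_B) auto
  fix xi assume ep: "end_path m r xi"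
  {
    assume sn: "snd (node m r xi) = 1"
    have z: "zeros xi = r - 1" and L: "length xi + 2 \<le> m" using bio_path[OF ep r2 sn] by auto
    define k where "k = ones xi"
    define g where "g = m - length xi - 1"
    have len: "length xi = r - 1 + k" using zo_len[of xi] z by (simp add: k_def)
    have Mg: "m - length xi = Suc g" using L by (simp add: g_def)
    have gk: "g = m - r - k" using len L r2 by (simp add: g_def)
    obtain V where V: "good (Dist (B e) xi) (e^(2^(r-1))) V" "0 < V" "V \<le> 1 * (1+e^2)^(r-1) / 2^k" "V \<le> 1"
      using good_Dist[OF good0 _ _ zero_less_one, of xi] e0 e1 z by (auto simp: k_def)
    have mu2: "(e^(2^(r-1)))^2 = X"
    proof -
      from r2 obtain r' where r': "r = Suc r'" by (cases r) auto
      show ?thesis using eX unfolding r' by (simp add: power_mult[symmetric] mult.commute)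
    qed
    have "expect e (2^m) (\<lambda>ys. md_err_biorth (fst (node m r xi)) (transf ys xi))
        = E (iid (2^Suc g) (Dist (B e) xi)) (md_err_biorth (Suc g))"
      using expect_transf[of e xi m] e0 e1 L Mg by (simp add: node_eq)
    also have "\<dots> \<le> (2*2^Suc g - 1) * exp (-(2^g * X/(2*V)))"
      using bio_prob[OF V(1,2), of g] e0 mu2 by simp
    also have "\<dots> < bound r c m"
    proof -
      define Q where "Q = (1+e^2)^(r-1)"
      have Q1: "1 \<le> Q" unfolding Q_def by (rule one_le_power) simp
      have gm: "g + r + k = m" using gk len L by simp
      have gX: "2^g * X = c*m/2^k"
      proof -
        have "real g + (real r - real m) = - real k" using gm by linarith
        then have "(2::real)^g * 2 powr (real r - real m) = 1/2^k"
          by (simp add: powr_realpow[symmetric] powr_add[symmetric] powr_minus divide_inverse)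
        then show ?thesis unfolding Xd by (simp add: field_simps)
      qed
      have lnb: "c*m/2 - c*m/(2*Q) \<le> ln 2"
      proof -
        have "ln Q = real (r-1) * ln (1+e^2)" unfolding Q_def by (simp add: ln_realpow)
        also have "\<dots> \<le> real (r-1) * e^2" by (intro mult_left_mono ln_add_one_self_le_self) auto
        finally have lq: "ln Q \<le> real (r-1) * e^2" .
        have "ln (1/Q) \<le> 1/Q - 1" using Q1 by (intro ln_le_minus_one) simp
        then have "1 - 1/Q \<le> ln Q" using Q1 by (simp add: ln_div)
        then have "1 - 1/Q \<le> real (r-1) * e^2" using lq by linarith
        then have "c*m/2 * (1 - 1/Q) \<le> c*m/2 * (real (r-1) * e^2)" using c0 by (intro mult_left_mono) auto
        moreover have "c*m/2 * (1 - 1/Q) = c*m/2 - c*m/(2*Q)" by (simp add: field_simps)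
        moreover have "real (r-1) = real r - 1" using r2 by simp
        ultimately show ?thesis using cond3 by (simp add: algebra_simps)
      qed
      have Vb: "(k = 0 \<and> V \<le> 1) \<or> (1 \<le> k \<and> V \<le> Q/2^k)" using V unfolding Q_def by auto
      have "(2*2^Suc g - 1) * exp(-(2^g*X/(2*V))) < 2^m * exp(-(c*m/2))"
        by (rule bio_final[OF V(2) gX Q1 c0 lnb gm r2 Vb])
      then show ?thesis using c'eq bnd by linarith
    qed
    finally show "expect e (2^m) (\<lambda>ys. md_err_biorth (fst (node m r xi)) (transf ys xi)) < bound r c m" .
  }
  {
    assume sn: "snd (node m r xi) = fst (node m r xi)"
    fix \<sigma> :: nat assume \<sigma>: "\<sigma> < 2 ^ fst (node m r xi)"
    have z: "zeros xi + 2 \<le> r" and o: "ones xi = m - r" and L: "length xi + 2 \<le> m" using full_path[OF ep r2 _ sn] rm by auto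
    obtain V where V: "good (Dist (B e) xi) (e^(2^zeros xi)) V" "0 < V" "V \<le> 1 * (1+e^2)^zeros xi / 2^ones xi"
      using good_Dist[OF good0 _ _ zero_less_one, of xi] e0 e1 by auto
    have "expect e (2^m) (\<lambda>ys. coord_err (transf ys xi ! \<sigma>))
        = E (iid (2^(m - length xi)) (Dist (B e) xi)) (\<lambda>z. coord_err (z ! \<sigma>))"
      using expect_transf[of e xi m "\<lambda>z. coord_err (z ! \<sigma>)"] e0 e1 L by simp
    also have "\<dots> \<le> exp (-((e^(2^zeros xi))^2/(2*V)))"
      by (rule full_prob[OF V(1,2)]) (use e0 \<sigma> in \<open>simp_all add: node_eq\<close>)
    also have "\<dots> < bound r c m"
    proof -
      define z where "z = zeros xi"
      have "(e^(2^z))^2 = e^(2^Suc z)" by (simp add: power_mult[symmetric] mult.commute)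
      also have "\<dots> \<ge> e^(2^(r-1))"
        using z e0 e1 unfolding z_def by (intro power_decreasing power_increasing) auto
      finally have mu: "sqrt X \<le> (e^(2^z))^2" using eS by simp
      have "(1+e^2)^z \<le> (2::real)^z" using e1 e0 by (intro power_mono) (auto simp: power_le_one)
      also have "\<dots> \<le> 2^r" using z unfolding z_def by (intro power_increasing) auto
      finally have "V \<le> 2^r / 2^(m-r)" using V(3) o unfolding z_def by (simp add: divide_right_mono order_trans)
      then have V2: "2*V \<le> 2^(r+1) / 2^(m-r)" by simp
      have "sqrt X * 2^(m-r) / 2^(r+1) = sqrt X / (2^(r+1) / 2^(m-r))" by simp
      also have "\<dots> \<le> (e^(2^z))^2 / (2*V)"
        using mu V2 V(2) by (intro frac_le) auto
      finally have "(c/2 - ln 2) * m < (e^(2^z))^2 / (2*V)" using cond4 by linarith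
      then have "-((e^(2^z))^2/(2*V)) < -(c/2 - ln 2) * real m" by linarith
      then have "exp (-((e^(2^z))^2/(2*V))) < exp (-(c/2 - ln 2) * real m)" by (simp only: exp_less_cancel_iff)
      then show ?thesis using bnd unfolding z_def by linarith
    qed
    finally show "expect e (2^m) (\<lambda>ys. coord_err (transf ys xi ! \<sigma>)) < bound r c m" .
  }
qed


lemma asy1: fixes c R :: real shows "((\<lambda>m::nat. c * real m * 2 powr (R - real m)) \<longlongrightarrow> 0) sequentially"
  by real_asymp

lemma asy2: fixes c R K a :: real assumes "0 < a" "0 < c"
  shows "((\<lambda>m::nat. K * real m * (c * real m * 2 powr (R - real m)) powr a) \<longlongrightarrow> 0) sequentially"
  using assms by real_asymp

lemma asy3: fixes c R K C :: real assumes "0 < K" "0 < c"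
  shows "filterlim (\<lambda>m::nat. sqrt (c * real m * 2 powr (R - real m)) * 2 powr (real m - R) * K - C * real m) at_top sequentially"
  using assms by real_asymp

lemma asy4: fixes C R :: real assumes "0 < C"
  shows "((\<lambda>m::nat. max (exp (- C * real m)) (2 powr (- (real m - R) / 2 + sqrt (real m)))) \<longlongrightarrow> 0) sequentially"
proof -
  have "((\<lambda>m::nat. exp (- C * real m)) \<longlongrightarrow> 0) sequentially" using assms by real_asymp
  moreover have "((\<lambda>m::nat. 2 powr (- (real m - R) / 2 + sqrt (real m))) \<longlongrightarrow> 0) sequentially" by real_asymp
  ultimately show ?thesis using tendsto_max[of _ 0 _ _ 0] by fastforce
qed


theorem theorem4:
  fixes r :: nat and c :: real
  assumes "r \<ge> 2" and "c > ln 4"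
  shows "(\<forall>\<^sub>F m in sequentially. \<forall>xi. end_path m r xi \<longrightarrow>
            (snd (node m r xi) = 1 \<longrightarrow>
               expect (eps_tilde r c m) (2 ^ m)
                 (\<lambda>ys. md_err_biorth (fst (node m r xi)) (transf ys xi)) < bound r c m)
          \<and> (snd (node m r xi) = fst (node m r xi) \<longrightarrow>
               (\<forall>\<sigma> < 2 ^ fst (node m r xi).
                  expect (eps_tilde r c m) (2 ^ m) (\<lambda>ys. coord_err (transf ys xi ! \<sigma>)) < bound r c m)))
         \<and> (bound r c \<longlonglongrightarrow> 0)"
proof
  have ln4: "ln (4::real) = 2 * ln 2" using ln_realpow[of 2 2] by simp
  have c0: "0 < c" using assms(2) ln4 ln_gt_zero[of 2] by linarith
  have C0: "0 < c/2 - ln 2" using assms(2) ln4 by linarith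
  define X where "X = (\<lambda>m::nat. c * real m * 2 powr (real r - real m))"
  have ev1: "\<forall>\<^sub>F m in sequentially. r + 2 < m" by (rule eventually_gt_at_top)
  have ev2: "\<forall>\<^sub>F m in sequentially. X m < 1"
    using order_tendstoD(2)[OF asy1[of c "real r"], of 1] unfolding X_def by simp
  have ev3: "\<forall>\<^sub>F m in sequentially. c * m * (r - 1) * (eps_tilde r c m)^2 / 2 \<le> ln 2"
  proof -
    have a0: "0 < (2::real)/2^r" by simp
    have "\<forall>\<^sub>F m in sequentially. (c*(real r - 1)/2) * real m * (c * real m * 2 powr (real r - real m)) powr (2/2^r) < ln 2"
      using order_tendstoD(2)[OF asy2[OF a0 c0, of "c*(real r - 1)/2" "real r"], of "ln 2"] by simp
    moreover have "\<forall>\<^sub>F m in sequentially. (0::nat) < m" by (rule eventually_gt_at_top)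
    ultimately show ?thesis
    proof eventually_elim
      case (elim m)
      have "0 < c * real m * 2 powr (real r - real m)" using elim(2) c0 by simp
      then have "(eps_tilde r c m)^2 = (c * real m * 2 powr (real r - real m)) powr (2/2^r)"
        unfolding eps_tilde_def by (subst powr_power) (use elim(2) c0 in auto)
      moreover have "real (r - 1) = real r - 1" using assms(1) by simp
      ultimately show ?case using elim(1) by (simp add: algebra_simps)
    qed
  qed
  have ev4: "\<forall>\<^sub>F m in sequentially. (c/2 - ln 2) * m < sqrt (X m) * 2^(m-r) / 2^(r+1)"
  proof -
    have K0: "0 < 1/(2::real)^(r+1)" by simp
    have "\<forall>\<^sub>F m in sequentially. 1 \<le> sqrt (c * real m * 2 powr (real r - real m)) * 2 powr (real m - real r) * (1/2^(r+1)) - (c/2 - ln 2) * real m"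
      using asy3[OF K0 c0, of "real r" "c/2 - ln 2"] unfolding filterlim_at_top by blast
    moreover have "\<forall>\<^sub>F m in sequentially. r < m" by (rule eventually_gt_at_top)
    ultimately show ?thesis
    proof eventually_elim
      case (elim m)
      have "(2::real) powr (real m - real r) = 2^(m-r)" using elim(2) by (simp add: powr_realpow[symmetric] of_nat_diff)
      then show ?case using elim(1) unfolding X_def by simp
    qed
  qed
  show "\<forall>\<^sub>F m in sequentially. \<forall>xi. end_path m r xi \<longrightarrow>
            (snd (node m r xi) = 1 \<longrightarrow>
               expect (eps_tilde r c m) (2 ^ m)
                 (\<lambda>ys. md_err_biorth (fst (node m r xi)) (transf ys xi)) < bound r c m)
          \<and> (snd (node m r xi) = fst (node m r xi) \<longrightarrow>
               (\<forall>\<sigma> < 2 ^ fst (node m r xi).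
                  expect (eps_tilde r c m) (2 ^ m) (\<lambda>ys. coord_err (transf ys xi ! \<sigma>)) < bound r c m))"
    using ev1 ev2 ev3 ev4
  proof eventually_elim
    case (elim m)
    show ?case by (rule main_step[OF assms(1) c0 elim(1) X_def[THEN fun_cong] elim(2) refl elim(3) elim(4)]) 
  qed
  have "bound r c = (\<lambda>m. max (exp (- (c/2 - ln 2) * real m)) (2 powr (- (real m - real r) / 2 + sqrt (real m))))"
    by (rule ext) (simp add: bound_def)
  then show "bound r c \<longlonglongrightarrow> 0" using asy4[OF C0, of "real r"] by simp
qed

end
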